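(* Let $\nu,k$ be integers with $2\nu-1\ge k\ge\nu-1\ge1$. Then $N(2\nu,k)=2$ if $k\equiv2\nu+1\pmod3$, and $N(2\nu,k)=0$ otherwise.
   Context: For $n>k\ge1$, $N(n,k)$ is the nullity of the $n\times n$ skew-symmetric Toeplitz matrix $A(n,k)$ whose first $k$ superdiagonals have all entries $1$ and whose remaining superdiagonals have all entries $0$. *)

theory Defs
  imports "Jordan_Normal_Form.Matrix_Kernel"
begin

definition skewA :: "nat \<Rightarrow> nat \<Rightarrow> real mat" where
  "skewA n k = mat n n (\<lambda>(i,j).
      if i < j \<and> j - i \<le> k then 1
      else if j < i \<and> i - j \<le> k then -1
      else 0)"

definition nullityN :: "nat \<Rightarrow> nat \<Rightarrow> nat" where
  "nullityN n k = kernel_dim (skewA n k)"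

end

theory Submission
  imports Defs
begin


definition PS :: "real vec \<Rightarrow> nat \<Rightarrow> real" where
  "PS x j = (\<Sum>l<j. x $ l)"

lemma sum_ivl_PS: "p \<le> q \<Longrightarrow> sum (\<lambda>l. x $ l) {p..<q} = PS x q - PS x p"
  unfolding PS_def
  by (metis add_diff_cancel_left' atLeast0LessThan sum.atLeastLessThan_concat zero_le)

lemma skewA_carrier: "skewA n k \<in> carrier_mat n n"
  unfolding skewA_def by auto

lemma skewA_mult:
  assumes x: "x \<in> carrier_vec n" and i: "i < n"
  shows "(skewA n k *\<^sub>v x) $ i =
     (PS x (min (i+k+1) n) - PS x (i+1)) - (PS x i - PS x (i-k))"
proof -
  have "(skewA n k *\<^sub>v x) $ i = (\<Sum>l\<in>{0..<n}. (if i < l \<and> l - i \<le> k then 1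
      else if l < i \<and> i - l \<le> k then -1 else 0) * x $ l)"
    using x i unfolding skewA_def by (auto simp: scalar_prod_def)
  also have "\<dots> = (\<Sum>l\<in>{0..<n}. (if l \<in> {i+1..<min (i+k+1) n} then x $ l else 0))
      - (\<Sum>l\<in>{0..<n}. (if l \<in> {i-k..<i} then x $ l else 0))"
    unfolding sum_subtractf[symmetric]
    by (rule sum.cong, auto)
  also have "(\<Sum>l\<in>{0..<n}. (if l \<in> {i+1..<min (i+k+1) n} then x $ l else 0))
     = sum (\<lambda>l. x $ l) {i+1..<min (i+k+1) n}"
    by (subst sum.inter_restrict[symmetric], simp, rule sum.cong, auto)
  also have "(\<Sum>l\<in>{0..<n}. (if l \<in> {i-k..<i} then x $ l else 0))
     = sum (\<lambda>l. x $ l) {i-k..<i}"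
  proof -
    have "{0..<n} \<inter> {i-k..<i} = {i-k..<i}" using i by auto
    thus ?thesis using sum.inter_restrict[of "{0..<n}" "\<lambda>l. x $ l" "{i-k..<i}"] by simp
  qed
  finally show ?thesis using i by (simp add: sum_ivl_PS)
qed



definition pat :: "real \<Rightarrow> real \<Rightarrow> nat \<Rightarrow> real" where
  "pat s T j = (if j mod 3 = 0 then 0 else if j mod 3 = 1 then s else T - s)"

locale eqs =
  fixes n k :: nat and S :: "nat \<Rightarrow> real"
  assumes ev: "even n" and kn: "k < n" and nk: "n \<le> 2*k+2"
    and S0: "S 0 = 0"
    and E: "\<And>i. i < n \<Longrightarrow> S (min (i+k+1) n) + S (i-k) = S i + S (i+1)"
begin

abbreviation "a \<equiv> n - k - 1"

lemma Einst: assumes "i < n" "min (i+k+1) n = p" "i - k = q" "i + 1 = r"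
  shows "S p + S q = S i + S r"
  using E[OF assms(1)] assms(2-4) by simp

lemma R: assumes "1 \<le> j" "j+1 \<le> a"
  shows "S (j-1) + S j + S (j+1) = S n"
proof -
  have 1: "S (j+k) + S 0 = S (j-1) + S j"
    by (rule Einst[of "j-1"]) (use assms nk in auto)
  have 2: "S (j+k+1) + S 0 = S j + S (j+1)"
    by (rule Einst[of "j"]) (use assms nk in auto)
  have 3: "S n + S j = S (j+k) + S (j+k+1)"
    by (rule Einst[of "j+k"]) (use assms nk in auto)
  show ?thesis using 1 2 3 S0 by linarith
qed

lemma P1: "j \<le> a \<Longrightarrow> S j = pat (S 1) (S n) j"
proof (induction j rule: less_induct)
  case (less j)
  show ?case
  proof (cases "j \<le> 1")
    case True
    then show ?thesis using S0 by (cases j) (auto simp: pat_def)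
  next
    case False
    then obtain m where m: "j = m + 2" by (metis add.commute le_Suc_ex not_less_eq_eq one_add_one plus_1_eq_Suc)
    have r: "S m + S (m+1) + S (m+2) = S n" using R[of "m+1"] less.prems m by simp
    have h1: "S m = pat (S 1) (S n) m" using less.IH[of m] less.prems m by simp
    have h2: "S (m+1) = pat (S 1) (S n) (m+1)" using less.IH[of "m+1"] less.prems m by simp
    have "m mod 3 = 0 \<and> (m+1) mod 3 = 1 \<and> (m+2) mod 3 = 2 \<or>
          m mod 3 = 1 \<and> (m+1) mod 3 = 2 \<and> (m+2) mod 3 = 0 \<or>
          m mod 3 = 2 \<and> (m+1) mod 3 = 0 \<and> (m+2) mod 3 = 1" by presburger
    then show ?thesis using r h1 h2 unfolding m pat_def by auto
  qed
qed

lemma Z: assumes "1 \<le> a" shows "S (a-1) = 0"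
proof -
  have 1: "S (n-1) + S 0 = S (a-1) + S a"
    by (rule Einst[of "a-1"]) (use assms nk in auto)
  have 2: "S n + S a = S (n-1) + S n"
    by (rule Einst[of "n-1"]) (use assms nk in auto)
  show ?thesis using 1 2 S0 by linarith
qed

lemma P3: assumes "a \<le> j" "j \<le> k+1"
  shows "S j = (if even (j-a) then S a else S n - S a)"
  using assms
proof (induction j rule: dec_induct)
  case base
  then show ?case by simp
next
  case (step m)
  have 1: "S n + S 0 = S m + S (m+1)"
    by (rule Einst[of m]) (use step nk kn in auto)
  define d where "d = m - a"
  have 2: "Suc m - a = Suc d" using step unfolding d_def by simp
  have 3: "S m = (if even d then S a else S n - S a)" using step unfolding d_def by simp
  have 4: "S (Suc m) = S n - S m" using 1 S0 by simp
  show ?case unfolding 2 4 3 by (cases "even d") auto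
qed

lemma P3': "a \<le> j \<Longrightarrow> j \<le> k+1 \<Longrightarrow> j - a = d \<Longrightarrow> S j = (if even d then S a else S n - S a)"
  using P3 by blast

lemma P4: assumes "1 \<le> a" shows "S (k+1) = S 1"
proof -
  have 1: "S (k+1) + S 0 = S 0 + S 1"
    by (rule Einst[of 0]) (use assms nk in auto)
  show ?thesis using 1 S0 by linarith
qed

lemma F: assumes "i < a" shows "S (i+k+1) = S i + S (i+1)"
proof -
  have 1: "S (i+k+1) + S 0 = S i + S (i+1)"
    by (rule Einst[of i]) (use assms nk in auto)
  show ?thesis using 1 S0 by linarith
qed

lemma allzero: assumes "S 1 = 0" "S n = 0" "j \<le> n" shows "S j = 0"
proof -
  have a: "S j = 0" if "j \<le> a" for j
  proof -
    have "S j = pat (S 1) (S n) j" using P1 that by blast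
    then show ?thesis unfolding assms(1,2) pat_def by simp
  qed
  have b: "S j = 0" if "a \<le> j" "j \<le> k+1" for j
  proof -
    have "S j = (if even (j-a) then S a else S n - S a)" using P3 that by blast
    then show ?thesis unfolding assms(2) a[OF order_refl] by simp
  qed
  show ?thesis
  proof (cases "j \<le> k+1")
    case True
    then show ?thesis using a b by (cases "j \<le> a") auto
  next
    case False
    show ?thesis
    proof (cases "j = n")
      case True then show ?thesis using assms by simp
    next
      case False
      define i where "i = j - k - 1"
      have "i < a" "j = i+k+1" using False \<open>\<not> j \<le> k+1\<close> \<open>j \<le> n\<close> unfolding i_def by auto
      then show ?thesis using F[of i] a[of i] a[of "i+1"] by simp
    qed
  qed
qed

lemma bad: assumes "a mod 3 \<noteq> 1" shows "S 1 = 0 \<and> S n = 0"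
proof (cases "a = 0")
  case True
  have kn1: "k+1 = n" using True kn by auto
  have h: "S (k+1) = (if even n then S a else S n - S a)"
    by (rule P3') (use True kn in auto)
  have "S (k+1) = S a" using h ev by simp
  then have "S n = 0" unfolding kn1 True using S0 by simp
  moreover have h2: "S 1 = (if even (1::nat) then S a else S n - S a)"
    by (rule P3') (use True kn nk in auto)
  then have "S 1 = S n - S a" by simp
  ultimately show ?thesis using S0 True by simp
next
  case False
  have z: "S (a-1) = 0" using Z False by simp
  have p1: "S (a-1) = pat (S 1) (S n) (a-1)" "S a = pat (S 1) (S n) a" by (rule P1, simp)+
  have e: "even (k+1-a)" using ev nk kn by presburger
  have p3: "S (k+1) = (if even (k+1-a) then S a else S n - S a)"
    by (rule P3') (use nk in auto)
  then have p3': "S (k+1) = S a" using e by simp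
  have p4: "S (k+1) = S 1" using P4 False by simp
  have "a mod 3 = 0 \<and> (a-1) mod 3 = 2 \<or> a mod 3 = 2 \<and> (a-1) mod 3 = 1"
  proof -
    obtain b where ab: "a = Suc b" using False by (cases a) auto
    have "Suc b mod 3 = 0 \<and> b mod 3 = 2 \<or> Suc b mod 3 = 2 \<and> b mod 3 = 1"
      using assms unfolding ab by presburger
    then show ?thesis unfolding ab by simp
  qed
  then show ?thesis
  proof
    assume h: "a mod 3 = 0 \<and> (a-1) mod 3 = 2"
    have "S (a-1) = S n - S 1" using p1(1) h unfolding pat_def by simp
    moreover have "S a = 0" using p1(2) h unfolding pat_def by simp
    ultimately show ?thesis using z p3' p4 by linarith
  next
    assume h: "a mod 3 = 2 \<and> (a-1) mod 3 = 1"
    have "S (a-1) = S 1" using p1(1) h unfolding pat_def by simp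
    moreover have "S a = S n - S 1" using p1(2) h unfolding pat_def by simp
    ultimately show ?thesis using z p3' p4 by linarith
  qed
qed

end

definition pat3 :: "real \<Rightarrow> real \<Rightarrow> nat \<Rightarrow> real" where
  "pat3 s T i = (if i mod 3 = 0 then s else if i mod 3 = 1 then T else T - s)"

definition G :: "nat \<Rightarrow> nat \<Rightarrow> real \<Rightarrow> real \<Rightarrow> nat \<Rightarrow> real" where
  "G n k s T j = (if j \<le> n - k - 1 then pat s T j
     else if j \<le> k+1 then (if even (j - (n-k-1)) then s else T - s)
     else pat3 s T (j-k-1))"

locale goodc =
  fixes n k :: nat and s T :: real
  assumes ev: "even n" and kn: "k < n" and nk: "n \<le> 2*k+2"
    and a1: "(n-k-1) mod 3 = 1"
begin

abbreviation "a \<equiv> n - k - 1"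

lemma G1: assumes "j \<le> a" shows "G n k s T j = pat s T j"
  unfolding G_def using assms by (rule if_P)

lemma G2: assumes "a \<le> j" "j \<le> k+1" "j - a = d"
  shows "G n k s T j = (if even d then s else T - s)"
proof (cases "j = a")
  case True
  then have "d = 0" using assms by simp
  have "G n k s T j = pat s T a" using G1 True by simp
  also have "\<dots> = s" using a1 unfolding pat_def by simp
  finally show ?thesis using \<open>d = 0\<close> by simp
next
  case False
  then have "\<not> j \<le> a" using assms by simp
  then show ?thesis using assms(2,3) unfolding G_def by (simp only: if_False if_True)
qed

lemma G3: assumes "k+1 \<le> j" shows "G n k s T j = pat3 s T (j-k-1)"
proof (cases "k+1 < j")
  case True
  then have "\<not> j \<le> a" "\<not> j \<le> k+1" using nk by auto
  then show ?thesis unfolding G_def by (simp only: if_False)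
next
  case False
  then have j: "j = k+1" using assms by simp
  show ?thesis
  proof (cases "j \<le> a")
    case True
    then have "a = k+1" using j nk by simp
    then have "G n k s T j = pat s T a" using G1 True j by simp
    also have "\<dots> = s" using a1 unfolding pat_def by simp
    finally show ?thesis using j unfolding pat3_def by simp
  next
    case False
    have "even (j - a)" using j ev nk kn by presburger
    have "G n k s T j = (if even (j-a) then s else T - s)"
      by (rule G2) (use False j in auto)
    then show ?thesis using \<open>even (j-a)\<close> j unfolding pat3_def by simp
  qed
qed

lemma G_E: assumes "i < n"
  shows "G n k s T (min (i+k+1) n) + G n k s T (i-k) = G n k s T i + G n k s T (i+1)"
proof -
  consider "i < a" | "a \<le> i" "i \<le> k" | "k < i" by linarith
  then show ?thesis
  proof cases
    case 1
    have m: "min (i+k+1) n = i+k+1" "i - k = 0" using 1 nk by auto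
    have "G n k s T (i+k+1) = pat3 s T i" using G3[of "i+k+1"] by simp
    moreover have "G n k s T 0 = 0" using G1[of 0] by (simp add: pat_def)
    moreover have "G n k s T i = pat s T i" "G n k s T (i+1) = pat s T (i+1)"
      using G1 1 by auto
    moreover have "i mod 3 = 0 \<and> (i+1) mod 3 = 1 \<or> i mod 3 = 1 \<and> (i+1) mod 3 = 2 \<or>
       i mod 3 = 2 \<and> (i+1) mod 3 = 0" by presburger
    ultimately show ?thesis unfolding m pat_def pat3_def by auto
  next
    case 2
    have m: "min (i+k+1) n = n" "i - k = 0" using 2 kn nk by auto
    define d where "d = i - a"
    have "G n k s T n = pat3 s T a" using G3[of n] kn by (simp add: diff_diff_add)
    then have gn: "G n k s T n = T" using a1 unfolding pat3_def by simp
    moreover have "G n k s T 0 = 0" using G1[of 0] by (simp add: pat_def)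
    moreover have "G n k s T i = (if even d then s else T - s)"
      by (rule G2) (use 2 d_def in auto)
    moreover have "G n k s T (i+1) = (if even (Suc d) then s else T - s)"
      by (rule G2) (use 2 d_def in auto)
    ultimately show ?thesis unfolding m by auto
  next
    case 3
    define t where "t = i - k - 1"
    have m: "min (i+k+1) n = n" "i - k = t+1" "i = t+k+1" "t < a" using 3 kn nk assms unfolding t_def by auto
    have "G n k s T n = pat3 s T a" using G3[of n] kn by (simp add: diff_diff_add)
    then have gn: "G n k s T n = T" using a1 unfolding pat3_def by simp
    moreover have "G n k s T (t+1) = pat s T (t+1)" using G1 m by simp
    moreover have "G n k s T (t+k+1) = pat3 s T t" using G3[of "t+k+1"] by simp
    moreover have "G n k s T (t+k+1+1) = pat3 s T (t+1)" using G3[of "t+k+1+1"] by simp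
    moreover have "t mod 3 = 0 \<and> (t+1) mod 3 = 1 \<or> t mod 3 = 1 \<and> (t+1) mod 3 = 2 \<or>
       t mod 3 = 2 \<and> (t+1) mod 3 = 0" by presburger
    ultimately show ?thesis unfolding m(1) m(2) unfolding m(3) pat_def pat3_def by auto
  qed
qed

lemma G_0: "G n k s T 0 = 0" using G1[of 0] by (simp add: pat_def)

lemma G_eqs: "eqs n k (G n k s T)"
  by (rule eqs.intro[OF ev kn nk G_0 G_E])
lemma G_1: "G n k s T 1 = s" using G1[of 1] a1 by (simp add: pat_def)
lemma G_n: "G n k s T n = T"
proof -
  have "G n k s T n = pat3 s T a" using G3[of n] kn by (simp add: diff_diff_add)
  then show ?thesis using a1 unfolding pat3_def by simp
qed

end


lemma PS_0[simp]: "PS x 0 = 0" unfolding PS_def by simp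

lemma PS_Suc: "x $ l = PS x (l+1) - PS x l"
  unfolding PS_def by simp

lemma PS_vec: "j \<le> n \<Longrightarrow> PS (vec n f) j = (\<Sum>l<j. f l)"
  unfolding PS_def by (rule sum.cong) auto

lemma ker_iff: "x \<in> mat_kernel (skewA n k) \<longleftrightarrow> x \<in> carrier_vec n \<and>
   (\<forall>i<n. PS x (min (i+k+1) n) + PS x (i-k) = PS x i + PS x (i+1))"
proof -
  have "x \<in> mat_kernel (skewA n k) \<longleftrightarrow> x \<in> carrier_vec n \<and> skewA n k *\<^sub>v x = 0\<^sub>v n"
    using mat_kernel[OF skewA_carrier] by blast
  also have "\<dots> \<longleftrightarrow> x \<in> carrier_vec n \<and> (\<forall>i<n. (skewA n k *\<^sub>v x) $ i = 0)"
  proof -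
    have "dim_vec (skewA n k *\<^sub>v x) = n" using skewA_carrier[of n k] by simp
    then have "skewA n k *\<^sub>v x = 0\<^sub>v n \<longleftrightarrow> (\<forall>i<n. (skewA n k *\<^sub>v x) $ i = 0)"
      by (auto simp: vec_eq_iff)
    then show ?thesis by blast
  qed
  also have "\<dots> \<longleftrightarrow> x \<in> carrier_vec n \<and>
   (\<forall>i<n. PS x (min (i+k+1) n) + PS x (i-k) = PS x i + PS x (i+1))"
  proof -
    have "(skewA n k *\<^sub>v x) $ i = 0 \<longleftrightarrow> PS x (min (i+k+1) n) + PS x (i-k) = PS x i + PS x (i+1)"
      if "x \<in> carrier_vec n" "i < n" for i
      using skewA_mult[OF that, of k] by linarith
    then show ?thesis by blast
  qed
  finally show ?thesis .
qed

lemma ker_eqs: assumes "x \<in> mat_kernel (skewA n k)" "even n" "k < n" "n \<le> 2*k+2"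
  shows "eqs n k (PS x)"
  using assms ker_iff[of x n k] by (intro eqs.intro) auto

lemma ker_zero: assumes "x \<in> mat_kernel (skewA n k)" "even n" "k < n" "n \<le> 2*k+2"
  and "PS x 1 = 0" "PS x n = 0"
  shows "x = 0\<^sub>v n"
proof -
  interpret eqs n k "PS x" by (rule ker_eqs[OF assms(1-4)])
  have c: "x \<in> carrier_vec n" using assms(1) ker_iff by blast
  show ?thesis
  proof (rule eq_vecI)
    fix i assume "i < dim_vec (0\<^sub>v n :: real vec)"
    then have i: "i < n" by simp
    have "PS x (i+1) = 0" "PS x i = 0" using allzero assms(5,6) i by auto
    then show "x $ i = 0\<^sub>v n $ i" using PS_Suc[of x i] i by simp
  qed (use c in auto)
qed

definition wv :: "nat \<Rightarrow> nat \<Rightarrow> real \<Rightarrow> real \<Rightarrow> real vec" where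
  "wv n k s T = vec n (\<lambda>l. G n k s T (l+1) - G n k s T l)"

context goodc
begin

lemma PS_wv: "j \<le> n \<Longrightarrow> PS (wv n k s T) j = G n k s T j"
  unfolding wv_def using G_0 by (simp add: PS_vec sum_lessThan_telescope)

lemma wv_ker: "wv n k s T \<in> mat_kernel (skewA n k)"
proof -
  have "\<forall>i<n. PS (wv n k s T) (min (i+k+1) n) + PS (wv n k s T) (i-k)
        = PS (wv n k s T) i + PS (wv n k s T) (i+1)"
    using G_E by (simp add: PS_wv)
  then show ?thesis unfolding ker_iff by (simp add: wv_def)
qed

lemma wv_0: "wv n k s T $ 0 = s"
  using kn G_0 G_1 unfolding wv_def by simp

lemma wv_last: "wv n k s T $ (n-1) = T - s"
proof -
  have "a \<noteq> 0" proof assume "a = 0" then show False using a1 by simp qed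
  then have "a \<ge> 1" by simp
  have "G n k s T (n-1) = pat3 s T (a-1)" using G3[of "n-1"] \<open>a \<ge> 1\<close> by (simp add: diff_diff_add)
  moreover have "(a-1) mod 3 = 0"
  proof -
    obtain b where ab: "a = Suc b" using \<open>a \<noteq> 0\<close> by (cases a) auto
    have "b mod 3 = 0" using a1 unfolding ab by presburger
    then show ?thesis unfolding ab by simp
  qed
  ultimately have "G n k s T (n-1) = s" unfolding pat3_def by simp
  then show ?thesis using kn G_n unfolding wv_def by simp
qed

end

lemma ker_unique: assumes "x \<in> mat_kernel (skewA n k)" "z \<in> mat_kernel (skewA n k)"
  "even n" "k < n" "n \<le> 2*k+2" "PS x 1 = PS z 1" "PS x n = PS z n"
  shows "x = z"
proof -
  define D where "D j = PS x j - PS z j" for j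
  interpret ex: eqs n k "PS x" using ker_eqs[OF assms(1,3-5)] .
  interpret ez: eqs n k "PS z" using ker_eqs[OF assms(2,3-5)] .
  have "eqs n k D"
  proof (rule eqs.intro[OF assms(3-5)])
    show "D 0 = 0" unfolding D_def by simp
    fix i assume "i < n"
    then show "D (min (i+k+1) n) + D (i-k) = D i + D (i+1)"
      unfolding D_def using ex.E ez.E by (simp add: algebra_simps)
  qed
  then interpret ed: eqs n k D .
  have z: "D j = 0" if "j \<le> n" for j
    by (rule ed.allzero) (use that assms(6,7) in \<open>auto simp: D_def\<close>)
  have c: "x \<in> carrier_vec n" "z \<in> carrier_vec n" using assms(1,2) ker_iff by blast+
  show ?thesis
  proof (rule eq_vecI)
    fix i assume "i < dim_vec z"
    then have i: "i < n" using c by simp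
    have "D (i+1) = 0" "D i = 0" using z i by auto
    then show "x $ i = z $ i"
      using PS_Suc[of x i] PS_Suc[of z i] i unfolding D_def by simp
  qed (use c in auto)
qed


lemma PS_sum_lin: assumes "\<And>l. l < j \<Longrightarrow> z $ l = p * u $ l + q * v $ l"
  shows "PS z j = p * PS u j + q * PS v j"
  unfolding PS_def using assms by (simp add: sum.distrib sum_distrib_left)

theorem lemma9p1:
  fixes \<nu> k :: nat
  assumes "2 * \<nu> - 1 \<ge> k" and "k \<ge> \<nu> - 1" and "\<nu> - 1 \<ge> 1"
  shows "nullityN (2 * \<nu>) k = (if k mod 3 = (2 * \<nu> + 1) mod 3 then 2 else 0)"
proof -
  define n where "n = 2 * \<nu>"
  have ev: "even n" unfolding n_def by simp
  have kn: "k < n" using assms unfolding n_def by linarith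
  have nk: "n \<le> 2*k+2" using assms unfolding n_def by linarith
  define a where "a = n - k - 1"
  have na: "n = a + k + 1" using kn unfolding a_def by simp
  have aa: "n - k - 1 = a" using na by simp
  have cond: "(k mod 3 = (2 * \<nu> + 1) mod 3) \<longleftrightarrow> (n-k-1) mod 3 = 1"
  proof -
    have "2 * \<nu> + 1 = a + k + 2" using na unfolding n_def by simp
    then have "(k mod 3 = (2 * \<nu> + 1) mod 3) \<longleftrightarrow> (k mod 3 = (a + k + 2) mod 3)" by simp
    also have "\<dots> \<longleftrightarrow> a mod 3 = 1" by presburger
    finally show ?thesis unfolding aa .
  qed
  let ?A = "skewA n k"
  have Ac: "?A \<in> carrier_mat n n" by (rule skewA_carrier)
  interpret K: kernel n n ?A by unfold_locales (rule Ac)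
  have dimc: "dim_col ?A = n" using Ac by simp
  have nul: "nullityN n k = K.dim" unfolding nullityN_def kernel_dim_def dimc ..
  show ?thesis
  proof (cases "(n-k-1) mod 3 = 1")
    case False
    have K1: "mat_kernel (1\<^sub>m n :: real mat) = {0\<^sub>v n}"
    proof -
      have "x = 0\<^sub>v n" if "x \<in> mat_kernel (1\<^sub>m n :: real mat)" for x
        using mat_kernelD[OF one_carrier_mat that] by simp
      moreover have "0\<^sub>v n \<in> mat_kernel (1\<^sub>m n :: real mat)"
        by (rule mat_kernelI[OF one_carrier_mat]) auto
      ultimately show ?thesis by blast
    qed
    have KA: "mat_kernel ?A = {0\<^sub>v n}"
    proof -
      have "x = 0\<^sub>v n" if x: "x \<in> mat_kernel ?A" for x
      proof -
        interpret eqs n k "PS x" by (rule ker_eqs[OF x ev kn nk])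
        have "PS x 1 = 0 \<and> PS x n = 0" using bad False by blast
        then show ?thesis using ker_zero[OF x ev kn nk] by blast
      qed
      moreover have "0\<^sub>v n \<in> mat_kernel ?A" using K.Ker.zero_closed by simp
      ultimately show ?thesis by blast
    qed
    have "K.dim = kernel.dim n (1\<^sub>m n :: real mat)" unfolding KA K1 ..
    also have "\<dots> = 0" by (rule kernel_one_mat)
    finally show ?thesis using nul False cond unfolding n_def by simp
  next
    case True
    have g10: "goodc n k" and g01: "goodc n k"
      using ev kn nk True unfolding goodc_def by auto
    define u where "u = wv n k 1 0"
    define v where "v = wv n k 0 1"
    have uk: "u \<in> mat_kernel ?A" unfolding u_def by (rule goodc.wv_ker[OF g10])
    have vk: "v \<in> mat_kernel ?A" unfolding v_def by (rule goodc.wv_ker[OF g01])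
    have u0: "u $ 0 = 1" unfolding u_def using goodc.wv_0[OF g10] .
    have v0: "v $ 0 = 0" unfolding v_def using goodc.wv_0[OF g01] .
    have un: "u $ (n-1) = -1" unfolding u_def using goodc.wv_last[OF g10] by simp
    have vn: "v $ (n-1) = 1" unfolding v_def using goodc.wv_last[OF g01] by simp
    have PSu: "PS u n = 0" unfolding u_def using goodc.PS_wv[OF g10, where j=n and s=1 and T=0] goodc.G_n[OF g10, where s=1 and T=0] by simp
    have PSv: "PS v n = 1" unfolding v_def using goodc.PS_wv[OF g01, where j=n and s=0 and T=1] goodc.G_n[OF g01, where s=0 and T=1] by simp
    have uv: "u \<noteq> v" using u0 v0 by auto
    have sub: "{u, v} \<subseteq> mat_kernel ?A" using uk vk by auto
    have n0: "0 < n" using kn by simp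
    have lc: "K.lincomb c {u, v} $ i = c u * u $ i + c v * v $ i" if "i < n" for c i
      using K.lincomb_index[OF that sub, of c] uv by simp
    have li: "K.lin_indpt {u, v}"
    proof (rule K.Ker.finite_lin_indpt2)
      show "finite {u, v}" by simp
      show "{u, v} \<subseteq> mat_kernel ?A" by (rule sub)
      fix c assume "c \<in> {u, v} \<rightarrow> UNIV" and z: "K.lincomb c {u, v} = 0\<^sub>v n"
      have "K.lincomb c {u, v} $ 0 = 0" "K.lincomb c {u, v} $ (n-1) = 0"
        using z n0 by auto
      then have "c u * u $ 0 + c v * v $ 0 = 0" "c u * u $ (n-1) + c v * v $ (n-1) = 0"
        using lc n0 by auto
      then have "c u = 0" "c v = 0" using u0 v0 un vn by auto
      then show "\<forall>w\<in>{u, v}. c w = 0" by auto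
    qed
    have gen: "K.Ker.span {u, v} = mat_kernel ?A"
    proof
      show "K.Ker.span {u, v} \<subseteq> mat_kernel ?A" by (rule K.Ker.span_is_subset2[OF sub])
      show "mat_kernel ?A \<subseteq> K.Ker.span {u, v}"
      proof
        fix x assume x: "x \<in> mat_kernel ?A"
        define c where "c w = (if w = u then PS x 1 else PS x n)" for w
        define z where "z = K.lincomb c {u, v}"
        have zk: "z \<in> mat_kernel ?A" unfolding z_def using K.Ker.lincomb_closed[OF sub] by simp
        have zi: "z $ l = c u * u $ l + c v * v $ l" if "l < n" for l
          unfolding z_def using lc[OF that] .
        have "PS z 1 = c u * PS u 1 + c v * PS v 1"
          by (rule PS_sum_lin) (use zi n0 in auto)
        then have z1: "PS z 1 = PS x 1" using u0 v0 uv unfolding c_def PS_def by simp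
        have "PS z n = c u * PS u n + c v * PS v n"
          by (rule PS_sum_lin) (use zi in auto)
        then have zn: "PS z n = PS x n" using PSu PSv uv unfolding c_def by simp
        have "x = z" by (rule ker_unique[OF x zk ev kn nk z1[symmetric] zn[symmetric]])
        moreover have "z \<in> K.Ker.span {u, v}"
          unfolding K.Ker.finite_span[OF _ sub, simplified] z_def by auto
        ultimately show "x \<in> K.Ker.span {u, v}" by simp
      qed
    qed
    have bas: "K.basis {u, v}" unfolding K.Ker.basis_def using li gen sub by auto
    have "K.dim = card {u, v}" by (rule K.Ker.dim_basis[OF _ bas]) simp
    also have "\<dots> = 2" using uv by simp
    finally show ?thesis using nul True cond unfolding n_def by simp
  qed
qed

end
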